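(* Consider one iteration of the $r$-cGA (without frequency borders) on \textit{G}-OneMax with current frequencies $p^{(t)}_{i,j}$, $(i,j)\in\{1,\dots,n\}\times\{0,\dots,r-1\}$, and let $x,y$ be the two strings sampled in this iteration. Fix $i\in\{1,\dots,n\}$ and let $D_i=\sum_{j\ne i}x_j-\sum_{j\ne i}y_j$. Then, for sufficiently large $n$, \[\Pr[D_i=0]\ge \frac{4}{9\left(2(r-1)\sqrt{3n}+1\right)}.\]
   Context: Let $n\ge 1$, $r\ge 2$ be integers and $K>0$. \textit{G}-OneMax$(x)=\sum_{i=1}^n x_i$ for $x\in\{0,\dots,r-1\}^n$. The $r$-cGA with parameter $K$ maintains frequencies $p^{(t)}_{i,j}$ (each row a probability distribution over $\{0,\dots,r-1\}$), initially $1/r$. In iteration $t$ it samples two strings $x,y$ independently, each position $i$ of each string taking value $j$ with probability $p^{(t)}_{i,j}$ independently of other positions; if $f(x)<f(y)$ they are swapped; then $p^{(t+1)}_{i,j}=p^{(t)}_{i,j}+\frac1K(\mathbf 1[x_i=j]-\mathbf 1[y_i=j])$. *)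

theory Defs
  imports Complex_Main "HOL-Library.FuncSet"
begin

text \<open>Positions are indexed 0..n-1 (instead of 1..n), values 0..r-1.
  A string is an extensional function on {0..<n} with values in {0..<r}.\<close>
definition strings :: "nat \<Rightarrow> nat \<Rightarrow> (nat \<Rightarrow> nat) set" where
  "strings n r = PiE {0..<n} (\<lambda>_. {0..<r})"

definition freq_ok :: "nat \<Rightarrow> nat \<Rightarrow> (nat \<Rightarrow> nat \<Rightarrow> real) \<Rightarrow> bool" where
  "freq_ok n r p \<longleftrightarrow> (\<forall>i<n. (\<forall>j<r. 0 \<le> p i j) \<and> (\<Sum>j<r. p i j) = 1)"

definition string_prob :: "nat \<Rightarrow> (nat \<Rightarrow> nat \<Rightarrow> real) \<Rightarrow> (nat \<Rightarrow> nat) \<Rightarrow> real" where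
  "string_prob n p x = (\<Prod>k<n. p k (x k))"

text \<open>Pr[D_i = 0] where x, y are sampled independently and
  D_i = sum_{k \<noteq> i} x_k - sum_{k \<noteq> i} y_k.  (The swap by fitness only
  negates D_i, so it does not affect this event.)\<close>
definition prob_D_zero :: "nat \<Rightarrow> nat \<Rightarrow> (nat \<Rightarrow> nat \<Rightarrow> real) \<Rightarrow> nat \<Rightarrow> real" where
  "prob_D_zero n r p i =
     (\<Sum>(x, y) \<in> {(x, y) \<in> strings n r \<times> strings n r.
                    (\<Sum>k\<in>{0..<n} - {i}. x k) = (\<Sum>k\<in>{0..<n} - {i}. y k)}.
        string_prob n p x * string_prob n p y)"

end

theory Submission
  imports Defs "HOL-Analysis.Convex"
begin

lemma sum_prod_strings:
  fixes g :: "nat \<Rightarrow> nat \<Rightarrow> real"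
  shows "(\<Sum>x\<in>strings n r. \<Prod>k<n. g k (x k)) = (\<Prod>k<n. \<Sum>j<r. g k j)"
  using prod_sum_PiE[of "{0..<n}" "\<lambda>_. {0..<r}" g]
  by (simp add: strings_def lessThan_atLeast0)

lemma sum_w_one:
  assumes "freq_ok n r p"
  shows "(\<Sum>x\<in>strings n r. string_prob n p x) = 1"
  using sum_prod_strings[of p n r] assms unfolding string_prob_def freq_ok_def
  by simp

definition mu :: "nat \<Rightarrow> (nat \<Rightarrow> nat \<Rightarrow> real) \<Rightarrow> nat \<Rightarrow> real" where
  "mu r p k = (\<Sum>j<r. p k j * real j)"

lemma cov:
  assumes "freq_ok n r p" "k < n" "l < n"
  shows "(\<Sum>x\<in>strings n r. string_prob n p x * (real (x k) - mu r p k) * (real (x l) - mu r p l))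
     = (if k = l then (\<Sum>j<r. p k j * (real j - mu r p k)^2) else 0)"
proof -
  define g where "g m j = p m j * (if m = k then real j - mu r p k else 1) * (if m = l then real j - mu r p l else 1)" for m j
  have 1: "string_prob n p x * (real (x k) - mu r p k) * (real (x l) - mu r p l) = (\<Prod>m<n. g m (x m))" for x
  proof -
    have "(\<Prod>m<n. g m (x m)) = (\<Prod>m<n. p m (x m)) * (\<Prod>m<n. (if m = k then real (x m) - mu r p k else 1)) * (\<Prod>m<n. (if m = l then real (x m) - mu r p l else 1))"
      unfolding g_def by (simp add: prod.distrib)
    also have "\<dots> = string_prob n p x * (real (x k) - mu r p k) * (real (x l) - mu r p l)"
      using assms(2,3) by (simp add: string_prob_def prod.delta)
    finally show ?thesis by simp
  qed
  have rows: "(\<Sum>j<r. p m j) = 1" if "m < n" for m using assms(1) that unfolding freq_ok_def by auto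
  have z: "(\<Sum>j<r. p m j * (real j - mu r p m)) = 0" if "m < n" for m
    using rows[OF that] by (simp add: algebra_simps sum_subtractf sum_distrib_right[symmetric] mu_def)
  have "(\<Sum>x\<in>strings n r. string_prob n p x * (real (x k) - mu r p k) * (real (x l) - mu r p l)) = (\<Prod>m<n. \<Sum>j<r. g m j)"
    by (simp add: 1 sum_prod_strings)
  also have "\<dots> = (if k = l then (\<Sum>j<r. p k j * (real j - mu r p k)^2) else 0)"
  proof (cases "k = l")
    case True
    have "(\<Prod>m<n. \<Sum>j<r. g m j) = (\<Prod>m<n. if m = k then (\<Sum>j<r. p k j * (real j - mu r p k)^2) else 1)"
      by (rule prod.cong) (auto simp: g_def True rows power2_eq_square mult.assoc)
    then show ?thesis using True assms by (simp add: prod.delta)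
  next
    case False
    have "(\<Sum>j<r. g k j) = 0" using z[OF assms(2)] False by (simp add: g_def)
    then show ?thesis using False assms(2) by (simp add: prod_zero_iff) (use lessThan_iff in blast)
  qed
  finally show ?thesis .
qed

lemma mu_bounds:
  assumes "freq_ok n r p" "m < n" "r \<ge> 1"
  shows "0 \<le> mu r p m \<and> mu r p m \<le> real r - 1"
proof -
  have nn: "\<forall>j<r. 0 \<le> p m j" and s1: "(\<Sum>j<r. p m j) = 1" using assms unfolding freq_ok_def by auto
  have "mu r p m \<le> (\<Sum>j<r. p m j * (real r - 1))"
    unfolding mu_def by (rule sum_mono) (use nn in \<open>auto intro!: mult_left_mono\<close>)
  also have "\<dots> = real r - 1" using s1 by (simp add: sum_distrib_right[symmetric])
  finally show ?thesis unfolding mu_def using nn by (auto intro!: sum_nonneg)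
qed

lemma var_row:
  assumes "freq_ok n r p" "m < n" "r \<ge> 1"
  shows "(\<Sum>j<r. p m j * (real j - mu r p m)^2) \<le> (real r - 1)^2"
proof -
  have nn: "\<forall>j<r. 0 \<le> p m j" and s1: "(\<Sum>j<r. p m j) = 1" using assms unfolding freq_ok_def by auto
  have b: "0 \<le> mu r p m \<and> mu r p m \<le> real r - 1" using mu_bounds[OF assms] .
  have "(\<Sum>j<r. p m j * (real j - mu r p m)^2) \<le> (\<Sum>j<r. p m j * (real r - 1)^2)"
  proof (rule sum_mono)
    fix j assume j: "j \<in> {..<r}"
    have "\<bar>real j - mu r p m\<bar> \<le> real r - 1" using b j by auto
    hence "(real j - mu r p m)^2 \<le> (real r - 1)^2"
      by (metis abs_le_square_iff abs_of_nonneg b order.trans abs_ge_zero)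
    then show "p m j * (real j - mu r p m)^2 \<le> p m j * (real r - 1)^2"
      using nn j by (auto intro!: mult_left_mono)
  qed
  also have "\<dots> = (real r - 1)^2" using s1 by (simp add: sum_distrib_right[symmetric])
  finally show ?thesis .
qed

lemma variance:
  assumes "freq_ok n r p" "K \<subseteq> {..<n}" "r \<ge> 1"
  shows "(\<Sum>x\<in>strings n r. string_prob n p x * (\<Sum>k\<in>K. real (x k) - mu r p k)^2) \<le> real (card K) * (real r - 1)^2"
proof -
  have fK: "finite K" using assms(2) finite_subset by blast
  have "(\<Sum>x\<in>strings n r. string_prob n p x * (\<Sum>k\<in>K. real (x k) - mu r p k)^2)
     = (\<Sum>x\<in>strings n r. \<Sum>k\<in>K. \<Sum>l\<in>K. string_prob n p x * (real (x k) - mu r p k) * (real (x l) - mu r p l))"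
  proof (rule sum.cong[OF refl])
    fix x
    have "(\<Sum>k\<in>K. real (x k) - mu r p k)^2 = (\<Sum>k\<in>K. \<Sum>l\<in>K. (real (x k) - mu r p k) * (real (x l) - mu r p l))"
      unfolding power2_eq_square by (rule sum_product)
    then show "string_prob n p x * (\<Sum>k\<in>K. real (x k) - mu r p k)^2 = (\<Sum>k\<in>K. \<Sum>l\<in>K. string_prob n p x * (real (x k) - mu r p k) * (real (x l) - mu r p l))"
      by (simp add: sum_distrib_left mult.assoc)
  qed
  also have "\<dots> = (\<Sum>k\<in>K. \<Sum>l\<in>K. \<Sum>x\<in>strings n r. string_prob n p x * (real (x k) - mu r p k) * (real (x l) - mu r p l))"
    by (subst sum.swap, rule sum.cong[OF refl], rule sum.swap)
  also have "\<dots> = (\<Sum>k\<in>K. \<Sum>l\<in>K. if k = l then (\<Sum>j<r. p k j * (real j - mu r p k)^2) else 0)"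
    by (intro sum.cong refl, rule cov[OF assms(1)]) (use assms(2) in auto)
  also have "\<dots> = (\<Sum>k\<in>K. (\<Sum>j<r. p k j * (real j - mu r p k)^2))"
    using fK by (simp add: sum.delta)
  also have "\<dots> \<le> (\<Sum>k\<in>K. (real r - 1)^2)"
    by (rule sum_mono, rule var_row[OF assms(1) _ assms(3)]) (use assms(2) in auto)
  also have "\<dots> = real (card K) * (real r - 1)^2" by simp
  finally show ?thesis .
qed

lemma card_nat_interval:
  fixes T :: "nat set"
  assumes "finite T" "\<And>s. s \<in> T \<Longrightarrow> \<bar>real s - m\<bar> \<le> c" "0 \<le> c"
  shows "real (card T) \<le> 2 * c + 1"
proof (cases "T = {}")
  case True
  then show ?thesis using assms(3) by simp
next
  case False
  have "T \<subseteq> {Min T..Max T}" using assms(1) by auto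
  hence "card T \<le> card {Min T..Max T}" by (intro card_mono) auto
  hence "card T \<le> Max T + 1 - Min T" by simp
  moreover have "Min T \<le> Max T" using assms(1) False by simp
  moreover have "real (Max T) - real (Min T) \<le> 2 * c"
    using assms(2)[OF Max_in[OF assms(1) False]] assms(2)[OF Min_in[OF assms(1) False]] by linarith
  ultimately show ?thesis by (simp add: of_nat_diff)
qed

theorem lemma3:
  fixes r :: nat
  assumes "r \<ge> 2"
  shows "\<exists>N::nat. \<forall>n\<ge>N. \<forall>p. freq_ok n r p \<longrightarrow> (\<forall>i<n.
           prob_D_zero n r p i \<ge> 4 / (9 * (2 * (real r - 1) * sqrt (3 * real n) + 1)))"
proof (intro exI[of _ 0] allI impI)
  fix n p i assume fo: "freq_ok n r p" and i: "i < n"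
  define A where "A = strings n r"
  define w where "w = string_prob n p"
  define K where "K = {0..<n} - {i}"
  define S where "S x = (\<Sum>k\<in>K. x k)" for x :: "nat \<Rightarrow> nat"
  define m where "m = (\<Sum>k\<in>K. mu r p k)"
  define c where "c = (real r - 1) * sqrt (3 * real n)"
  define P where "P s = (\<Sum>x\<in>{x\<in>A. S x = s}. w x)" for s
  have fA: "finite A" unfolding A_def strings_def by (simp add: finite_PiE)
  have wnn: "0 \<le> w x" if "x \<in> A" for x
    using that fo unfolding A_def w_def strings_def string_prob_def freq_ok_def
    by (auto intro!: prod_nonneg simp: PiE_def Pi_def)
  have w1: "sum w A = 1" unfolding A_def w_def using sum_w_one[OF fo] .
  have Sd: "real (S x) - m = (\<Sum>k\<in>K. real (x k) - mu r p k)" for x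
    by (simp add: S_def m_def sum_subtractf)
  have KK: "K \<subseteq> {..<n}" unfolding K_def by auto
  have cK: "card K \<le> n" using card_mono[OF _ KK] by simp
  have V: "(\<Sum>x\<in>A. w x * (real (S x) - m)^2) \<le> real n * (real r - 1)^2"
  proof -
    have "(\<Sum>x\<in>A. w x * (real (S x) - m)^2) \<le> real (card K) * (real r - 1)^2"
      unfolding Sd A_def w_def using variance[OF fo KK] assms by simp
    also have "\<dots> \<le> real n * (real r - 1)^2" using cK by (intro mult_right_mono) auto
    finally show ?thesis .
  qed
  have npos: "0 < real n" using i by simp
  have cpos: "0 < c" unfolding c_def using assms npos by simp
  have c2: "c^2 = 3 * real n * (real r - 1)^2" unfolding c_def using npos
    by (simp add: power_mult_distrib)
  define G where "G = {x\<in>A. \<bar>real (S x) - m\<bar> \<le> c}"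
  have GA: "G \<subseteq> A" unfolding G_def by auto
  have out: "sum w (A - G) \<le> 1/3"
  proof -
    have "sum w (A - G) \<le> (\<Sum>x\<in>A - G. w x * (real (S x) - m)^2 / c^2)"
    proof (rule sum_mono)
      fix x assume x: "x \<in> A - G"
      hence "c < \<bar>real (S x) - m\<bar>" unfolding G_def by auto
      hence "c^2 \<le> (real (S x) - m)^2" using cpos
        by (metis abs_le_square_iff abs_of_pos less_imp_le)
      hence "1 \<le> (real (S x) - m)^2 / c^2" using cpos by simp
      thus "w x \<le> w x * (real (S x) - m)^2 / c^2"
        using wnn[of x] x mult_left_mono[of 1 "(real (S x) - m)^2 / c^2" "w x"] by simp
    qed
    also have "\<dots> \<le> (\<Sum>x\<in>A. w x * (real (S x) - m)^2 / c^2)"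
      by (rule sum_mono2[OF fA]) (use wnn in auto)
    also have "\<dots> = (\<Sum>x\<in>A. w x * (real (S x) - m)^2) / c^2"
      by (simp add: sum_divide_distrib)
    also have "\<dots> \<le> (real n * (real r - 1)^2) / c^2"
      using V cpos by (simp add: divide_right_mono)
    also have "\<dots> = 1/3" using c2 npos assms by simp
    finally show ?thesis .
  qed
  have inG: "sum w G \<ge> 2/3"
    using sum.subset_diff[OF GA fA, of w] w1 out by simp
  have PG: "sum w G = (\<Sum>s\<in>S ` G. P s)"
  proof -
    have "sum w G = (\<Sum>s\<in>S ` G. sum w {x\<in>G. S x = s})"
      using sum.image_gen[of G w S] fA GA finite_subset by blast
    also have "\<dots> = (\<Sum>s\<in>S ` G. P s)"
    proof (rule sum.cong[OF refl])
      fix s assume "s \<in> S ` G"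
      then obtain x0 where "x0 \<in> G" "s = S x0" by auto
      hence "{x\<in>G. S x = s} = {x\<in>A. S x = s}" unfolding G_def by auto
      thus "sum w {x\<in>G. S x = s} = P s" unfolding P_def by simp
    qed
    finally show ?thesis .
  qed
  have prob: "prob_D_zero n r p i = (\<Sum>s\<in>S ` A. (P s)^2)"
  proof -
    have set: "{(x, y) \<in> A \<times> A. S x = S y} = Sigma A (\<lambda>x. {y\<in>A. S y = S x})" by auto
    have "prob_D_zero n r p i = (\<Sum>(x, y)\<in>Sigma A (\<lambda>x. {y\<in>A. S y = S x}). w x * w y)"
      unfolding prob_D_zero_def by (rule sum.cong) (auto simp: A_def w_def S_def K_def)
    also have "\<dots> = (\<Sum>x\<in>A. \<Sum>y\<in>{y\<in>A. S y = S x}. w x * w y)"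
      by (rule sum.Sigma[symmetric]) (use fA in auto)
    also have "\<dots> = (\<Sum>x\<in>A. w x * P (S x))"
      by (simp add: P_def sum_distrib_left)
    also have "\<dots> = (\<Sum>s\<in>S ` A. \<Sum>x\<in>{x\<in>A. S x = s}. w x * P (S x))"
      using sum.image_gen[OF fA, of "\<lambda>x. w x * P (S x)" S] .
    also have "\<dots> = (\<Sum>s\<in>S ` A. (P s)^2)"
    proof (rule sum.cong[OF refl])
      fix s
      have "(\<Sum>x\<in>{x\<in>A. S x = s}. w x * P (S x)) = (\<Sum>x\<in>{x\<in>A. S x = s}. w x * P s)"
        by (rule sum.cong) auto
      thus "(\<Sum>x\<in>{x\<in>A. S x = s}. w x * P (S x)) = (P s)^2"
        by (simp add: sum_distrib_right[symmetric] P_def power2_eq_square)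
    qed
    finally show ?thesis .
  qed
  have Pnn: "0 \<le> P s" for s unfolding P_def using wnn by (auto intro!: sum_nonneg)
  have fT: "finite (S ` G)" using fA GA finite_subset by blast
  have cardT: "real (card (S ` G)) \<le> 2 * c + 1"
    by (rule card_nat_interval[OF fT]) (use cpos in \<open>auto simp: G_def\<close>)
  have "(2/3)^2 \<le> (\<Sum>s\<in>S ` G. P s)^2"
    using inG PG by (intro power_mono) auto
  also have "\<dots> \<le> (\<Sum>s\<in>S ` G. (P s)^2) * real (card (S ` G))"
    by (rule sum_squared_le_sum_of_squares)
  also have "\<dots> \<le> (\<Sum>s\<in>S ` A. (P s)^2) * (2 * c + 1)"
  proof (rule mult_mono)
    show "(\<Sum>s\<in>S ` G. (P s)^2) \<le> (\<Sum>s\<in>S ` A. (P s)^2)"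
      by (rule sum_mono2) (use fA GA in auto)
  qed (use cardT in \<open>auto intro!: sum_nonneg\<close>)
  finally have "4/9 \<le> prob_D_zero n r p i * (2 * c + 1)" unfolding prob by (simp add: power2_eq_square)
  hence fin: "4/9 / (2 * c + 1) \<le> prob_D_zero n r p i" using cpos by (simp add: divide_le_eq algebra_simps)
  have eq: "4 / (9 * (2 * (real r - 1) * sqrt (3 * real n) + 1)) = 4/9 / (2 * c + 1)"
    unfolding c_def by (simp add: divide_divide_eq_left mult.assoc)
  show "prob_D_zero n r p i \<ge> 4 / (9 * (2 * (real r - 1) * sqrt (3 * real n) + 1))"
    unfolding eq by (rule fin)
qed

end
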